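(* Let $\mathbb{F}$ be a field, $n\ge2$ an integer and $h$ an integer with $0\le h\le n-2$. Then there exists a unital $\mathbb{F}$-algebra $\mathcal{A}$ with $\dim\mathcal{A}=n$ and $l(\mathcal{A})=2^h$.
   Context: Algebras are finite-dimensional, unital, not necessarily associative. For a finite generating set $S$ of $\mathcal{A}$, a word in $S$ is any product (with any bracketing) of finitely many elements of $S$; its length is the number of factors, and $1$ is a word of length $0$. $L_i(S)$ is the linear span of all words in $S$ of length at most $i$. The length of $S$ is $l(S)=\min\{k\ge0: L_k(S)=\mathcal{A}\}$, and $l(\mathcal{A})=\max\{l(S): S\text{ a finite generating set of }\mathcal{A}\}$. *)

theory Defs
  imports Main
begin

text \<open>An n-dimensional (not necessarily associative) algebra over a field 'a is modelled
by structure constants c i j k (e_i * e_j = sum_k c i j k e_k) on the coordinate space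
V_n = vectors nat => 'a vanishing outside {0..<n}.\<close>

definition vspace :: "nat \<Rightarrow> (nat \<Rightarrow> 'a::field) set" where
  "vspace n = {x. \<forall>k\<ge>n. x k = 0}"

definition amult :: "(nat \<Rightarrow> nat \<Rightarrow> nat \<Rightarrow> 'a::field) \<Rightarrow> nat \<Rightarrow> (nat \<Rightarrow> 'a) \<Rightarrow> (nat \<Rightarrow> 'a) \<Rightarrow> (nat \<Rightarrow> 'a)" where
  "amult c n x y = (\<lambda>k. if k < n then (\<Sum>i<n. \<Sum>j<n. x i * y j * c i j k) else 0)"

definition is_unit_of :: "(nat \<Rightarrow> nat \<Rightarrow> nat \<Rightarrow> 'a::field) \<Rightarrow> nat \<Rightarrow> (nat \<Rightarrow> 'a) \<Rightarrow> bool" where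
  "is_unit_of c n u \<longleftrightarrow> u \<in> vspace n \<and>
     (\<forall>x\<in>vspace n. amult c n u x = x \<and> amult c n x u = x)"

definition lspan :: "(nat \<Rightarrow> 'a::field) set \<Rightarrow> (nat \<Rightarrow> 'a) set" where
  "lspan X = {x. \<exists>T f. finite T \<and> T \<subseteq> X \<and> x = (\<lambda>k. \<Sum>t\<in>T. f t * t k)}"

text \<open>word c n u S k w: w is a word of length k in S (any bracketing); u (the unit) is the
word of length 0.\<close>
inductive word :: "(nat \<Rightarrow> nat \<Rightarrow> nat \<Rightarrow> 'a::field) \<Rightarrow> nat \<Rightarrow> (nat \<Rightarrow> 'a) \<Rightarrow> (nat \<Rightarrow> 'a) set
    \<Rightarrow> nat \<Rightarrow> (nat \<Rightarrow> 'a) \<Rightarrow> bool"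
  for c n u S where
  word_one: "word c n u S 0 u"
| word_gen: "s \<in> S \<Longrightarrow> word c n u S 1 s"
| word_mul: "word c n u S a x \<Longrightarrow> word c n u S b y \<Longrightarrow> word c n u S (a + b) (amult c n x y)"

definition Lspace :: "(nat \<Rightarrow> nat \<Rightarrow> nat \<Rightarrow> 'a::field) \<Rightarrow> nat \<Rightarrow> (nat \<Rightarrow> 'a) \<Rightarrow> (nat \<Rightarrow> 'a) set
    \<Rightarrow> nat \<Rightarrow> (nat \<Rightarrow> 'a) set" where
  "Lspace c n u S i = lspan {w. \<exists>k\<le>i. word c n u S k w}"

definition generating_set :: "(nat \<Rightarrow> nat \<Rightarrow> nat \<Rightarrow> 'a::field) \<Rightarrow> nat \<Rightarrow> (nat \<Rightarrow> 'a) \<Rightarrow> (nat \<Rightarrow> 'a) set \<Rightarrow> bool" where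
  "generating_set c n u S \<longleftrightarrow> finite S \<and> S \<subseteq> vspace n \<and> (\<exists>k. Lspace c n u S k = vspace n)"

definition set_length :: "(nat \<Rightarrow> nat \<Rightarrow> nat \<Rightarrow> 'a::field) \<Rightarrow> nat \<Rightarrow> (nat \<Rightarrow> 'a) \<Rightarrow> (nat \<Rightarrow> 'a) set \<Rightarrow> nat" where
  "set_length c n u S = (LEAST k. Lspace c n u S k = vspace n)"

definition alg_length :: "(nat \<Rightarrow> nat \<Rightarrow> nat \<Rightarrow> 'a::field) \<Rightarrow> nat \<Rightarrow> (nat \<Rightarrow> 'a) \<Rightarrow> nat" where
  "alg_length c n u = Max {set_length c n u S | S. generating_set c n u S}"

end

theory Submission imports Defs begin

definition subsp :: "(nat \<Rightarrow> 'a::field) set \<Rightarrow> bool" where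
  "subsp V \<longleftrightarrow> (\<lambda>k. 0) \<in> V \<and> (\<forall>x\<in>V. \<forall>y\<in>V. (\<lambda>k. x k + y k) \<in> V)
     \<and> (\<forall>a. \<forall>x\<in>V. (\<lambda>k. a * x k) \<in> V)"

lemma subsp_add: "subsp V \<Longrightarrow> x \<in> V \<Longrightarrow> y \<in> V \<Longrightarrow> (\<lambda>k. x k + y k) \<in> V"
  unfolding subsp_def by blast
lemma subsp_scale: "subsp V \<Longrightarrow> x \<in> V \<Longrightarrow> (\<lambda>k. a * x k) \<in> V"
  unfolding subsp_def by blast
lemma subsp_zero: "subsp V \<Longrightarrow> (\<lambda>k. 0) \<in> V"
  unfolding subsp_def by blast

lemma lspan_least:
  assumes "subsp V" "X \<subseteq> V" shows "lspan X \<subseteq> V"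
proof
  fix x assume "x \<in> lspan X"
  then obtain T f where T: "finite T" "T \<subseteq> X" and x: "x = (\<lambda>k. \<Sum>t\<in>T. f t * t k)"
    unfolding lspan_def by blast
  have "(\<lambda>k. \<Sum>t\<in>T. f t * t k) \<in> V" using T
  proof (induction T rule: finite_induct)
    case empty then show ?case using assms(1) by (simp add: subsp_def)
  next
    case (insert t0 T)
    have a: "(\<lambda>k. f t0 * t0 k) \<in> V" using insert assms unfolding subsp_def by blast
    have b: "(\<lambda>k. \<Sum>t\<in>T. f t * t k) \<in> V" using insert by blast
    have "(\<lambda>k. (f t0 * t0 k) + (\<Sum>t\<in>T. f t * t k)) \<in> V"
      using subsp_add[OF assms(1) a b] by simp
    then show ?case using insert by simp
  qed
  then show "x \<in> V" using x by simp
qed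

lemma lspan_sub: "X \<subseteq> lspan X"
proof
  fix x assume "x \<in> X"
  then show "x \<in> lspan X" unfolding lspan_def
    by (intro CollectI exI[of _ "{x}"] exI[of _ "\<lambda>_. 1"]) auto
qed

lemma lspan_mono: "X \<subseteq> Y \<Longrightarrow> lspan X \<subseteq> lspan Y"
  unfolding lspan_def by blast

lemma lspan_subsp: "subsp (lspan X)"
  unfolding subsp_def
proof (intro conjI ballI allI)
  show "(\<lambda>k. 0) \<in> lspan X" unfolding lspan_def
    by (intro CollectI exI[of _ "{}"] exI[of _ "\<lambda>_. 0"]) simp
next
  fix x y assume "x \<in> lspan X" "y \<in> lspan X"
  then obtain T1 f1 T2 f2 where T: "finite T1" "T1 \<subseteq> X" "x = (\<lambda>k. \<Sum>t\<in>T1. f1 t * t k)"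
     "finite T2" "T2 \<subseteq> X" "y = (\<lambda>k. \<Sum>t\<in>T2. f2 t * t k)"
    unfolding lspan_def by blast
  define g where "g t = (if t \<in> T1 then f1 t else 0) + (if t \<in> T2 then f2 t else 0)" for t
  have "(\<lambda>k. x k + y k) = (\<lambda>k. \<Sum>t\<in>T1 \<union> T2. g t * t k)"
  proof
    fix k
    have "(\<Sum>t\<in>T1 \<union> T2. g t * t k) = (\<Sum>t\<in>T1 \<union> T2. (if t \<in> T1 then f1 t * t k else 0))
         + (\<Sum>t\<in>T1 \<union> T2. (if t \<in> T2 then f2 t * t k else 0))"
      unfolding sum.distrib[symmetric] by (rule sum.cong) (auto simp: g_def distrib_right)
    also have "\<dots> = (\<Sum>t\<in>(T1 \<union> T2) \<inter> T1. f1 t * t k) + (\<Sum>t\<in>(T1 \<union> T2) \<inter> T2. f2 t * t k)"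
    proof -
      have f: "finite (T1 \<union> T2)" using T by simp
      show ?thesis
        unfolding sum.inter_restrict[OF f] ..
    qed
    also have "\<dots> = x k + y k" using T by (simp add: Int_absorb1 Int_absorb2)
    finally show "x k + y k = (\<Sum>t\<in>T1 \<union> T2. g t * t k)" by simp
  qed
  moreover have "finite (T1 \<union> T2)" "T1 \<union> T2 \<subseteq> X" using T(1,2,4,5) by auto
  ultimately show "(\<lambda>k. x k + y k) \<in> lspan X" unfolding lspan_def
    by (intro CollectI exI[of _ "T1 \<union> T2"] exI[of _ g] conjI)
next
  fix a x assume "x \<in> lspan X"
  then obtain T f where T: "finite T" "T \<subseteq> X" "x = (\<lambda>k. \<Sum>t\<in>T. f t * t k)"
    unfolding lspan_def by blast
  have "(\<lambda>k. a * x k) = (\<lambda>k. \<Sum>t\<in>T. (a * f t) * t k)"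
    using T by (simp add: sum_distrib_left mult.assoc)
  then show "(\<lambda>k. a * x k) \<in> lspan X" unfolding lspan_def using T(1,2)
    by (intro CollectI exI[of _ T] exI[of _ "\<lambda>t. a * f t"] conjI)
qed


definition cst :: "nat \<Rightarrow> nat \<Rightarrow> nat \<Rightarrow> nat \<Rightarrow> 'a::field" where
  "cst h i j k = (if i = 0 \<and> j = k then 1 else 0) + (if j = 0 \<and> i = k \<and> i \<noteq> 0 then 1 else 0)
     + (if i = j \<and> k = Suc i \<and> 1 \<le> i \<and> i \<le> h then 1 else 0)"

lemma mif: "(a::'a::field) * (if P then 1 else 0) = (if P then a else 0)" by simp

lemma mif2: "(a::'a::field) * (if P then b else 0) = (if P then a * b else 0)" by simp

lemma dsum:
  fixes x y :: "nat \<Rightarrow> 'a::field"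
  assumes "a < n" "b < n"
  shows "(\<Sum>i<n. \<Sum>j<n. x i * y j * (if i = a \<and> j = b then 1 else 0)) = x a * y b"
proof -
  have "(\<Sum>i<n. \<Sum>j<n. x i * y j * (if i = a \<and> j = b then 1 else 0))
     = (\<Sum>i<n. \<Sum>j<n. (if i = a then x i else 0) * (if j = b then y j else 0))"
    by (intro sum.cong refl) auto
  also have "\<dots> = (\<Sum>i<n. if i = a then x i else 0) * (\<Sum>j<n. if j = b then y j else 0)"
    by (simp only: sum_product)
  also have "\<dots> = x a * y b" using assms by simp
  finally show ?thesis .
qed


lemma amult_cst:
  fixes x y :: "nat \<Rightarrow> 'a::field"
  assumes "k < n"
  shows "amult (cst h) n x y k = x 0 * y k + (if k \<noteq> 0 then x k * y 0 else 0)
     + (if 2 \<le> k \<and> k \<le> Suc h then x (k-1) * y (k-1) else 0)"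
proof -
  have 1: "(\<Sum>i<n. \<Sum>j<n. x i * y j * (if i = 0 \<and> j = k then 1 else 0)) = x 0 * y k"
    using assms by (intro dsum) auto
  have 2: "(\<Sum>i<n. \<Sum>j<n. x i * y j * (if j = 0 \<and> i = k \<and> i \<noteq> 0 then 1 else 0))
      = (if k \<noteq> 0 then x k * y 0 else 0)"
  proof (cases "k = 0")
    case True
    show ?thesis using True by (auto intro!: sum.neutral)
  next
    case False
    have "(\<Sum>i<n. \<Sum>j<n. x i * y j * (if j = 0 \<and> i = k \<and> i \<noteq> 0 then 1 else 0))
      = (\<Sum>i<n. \<Sum>j<n. x i * y j * (if i = k \<and> j = 0 then 1 else 0))"
      using False by (intro sum.cong refl) auto
    also have "\<dots> = x k * y 0" using assms by (intro dsum) auto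
    finally show ?thesis using False by simp
  qed
  have 3: "(\<Sum>i<n. \<Sum>j<n. x i * y j * (if i = j \<and> k = Suc i \<and> 1 \<le> i \<and> i \<le> h then 1 else 0))
      = (if 2 \<le> k \<and> k \<le> Suc h then x (k-1) * y (k-1) else 0)"
  proof (cases "2 \<le> k \<and> k \<le> Suc h")
    case True
    have "(\<Sum>i<n. \<Sum>j<n. x i * y j * (if i = j \<and> k = Suc i \<and> 1 \<le> i \<and> i \<le> h then 1 else 0))
      = (\<Sum>i<n. \<Sum>j<n. x i * y j * (if i = k-1 \<and> j = k-1 then 1 else 0))"
      using True by (intro sum.cong refl) auto
    also have "\<dots> = x (k-1) * y (k-1)" using assms by (intro dsum) auto
    finally show ?thesis using True by simp
  next
    case False
    show ?thesis using False by (auto intro!: sum.neutral)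
  qed
  show ?thesis
    unfolding amult_def cst_def distrib_left sum.distrib
    using assms by (simp only: 1 2 3 if_True)
qed

lemma subsp_lin2: "subsp V \<Longrightarrow> x \<in> V \<Longrightarrow> y \<in> V \<Longrightarrow> (\<lambda>k. a * x k + b * y k) \<in> V"
  using subsp_add[of V "\<lambda>k. a * x k" "\<lambda>k. b * y k"] subsp_scale by blast

lemma vspace_subsp: "subsp (vspace n)"
  unfolding subsp_def vspace_def by auto

lemma amult_vspace: "amult c n x y \<in> vspace n"
  unfolding amult_def vspace_def by auto

lemma word_vspace:
  assumes "word c n u S k w" "S \<subseteq> vspace n" "u \<in> vspace n"
  shows "w \<in> vspace n"
  using assms by (induction rule: word.induct) (auto simp: amult_vspace)

lemma Lspace_subsp: "subsp (Lspace c n u S i)"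
  unfolding Lspace_def by (rule lspan_subsp)

lemma word_in_L: "word c n u S k w \<Longrightarrow> k \<le> i \<Longrightarrow> w \<in> Lspace c n u S i"
  proof -
  assume "word c n u S k w" "k \<le> i"
  then have "w \<in> {w. \<exists>k\<le>i. word c n u S k w}" by (intro CollectI exI conjI)
  then show ?thesis unfolding Lspace_def by (rule subsetD[OF lspan_sub])
qed

lemma Lspace_mono: "i \<le> j \<Longrightarrow> Lspace c n u S i \<subseteq> Lspace c n u S j"
  unfolding Lspace_def by (rule lspan_mono) (auto intro: order.trans)

lemma Lspace_vspace: "S \<subseteq> vspace n \<Longrightarrow> u \<in> vspace n \<Longrightarrow> Lspace c n u S i \<subseteq> vspace n"
  unfolding Lspace_def by (rule lspan_least[OF vspace_subsp]) (auto intro: word_vspace)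

lemma amult_add_l: "amult c n (\<lambda>k. x k + y k) z = (\<lambda>k. amult c n x z k + amult c n y z k)"
  unfolding amult_def by (auto simp: distrib_right sum.distrib)
lemma amult_add_r: "amult c n z (\<lambda>k. x k + y k) = (\<lambda>k. amult c n z x k + amult c n z y k)"
  unfolding amult_def by (auto simp: distrib_right distrib_left sum.distrib)
lemma amult_scale_l: "amult c n (\<lambda>k. a * x k) z = (\<lambda>k. a * amult c n x z k)"
  unfolding amult_def by (auto simp: sum_distrib_left mult.assoc)
lemma amult_scale_r: "amult c n z (\<lambda>k. a * x k) = (\<lambda>k. a * amult c n z x k)"
  unfolding amult_def by (auto simp: sum_distrib_left mult.assoc mult.left_commute)
lemma amult_zero_l: "amult c n (\<lambda>k. 0) z = (\<lambda>k. 0)"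
  unfolding amult_def by auto
lemma amult_zero_r: "amult c n z (\<lambda>k. 0) = (\<lambda>k. 0)"
  unfolding amult_def by auto

lemma subsp_pre_r:
  assumes "subsp W" shows "subsp {z. amult c n w z \<in> W}"
  unfolding subsp_def
  using assms subsp_zero[OF assms] subsp_add[OF assms] subsp_scale[OF assms]
  by (simp add: amult_zero_r amult_add_r amult_scale_r)

lemma subsp_pre_l:
  assumes "subsp W" shows "subsp {z. amult c n z w \<in> W}"
  unfolding subsp_def
  using assms subsp_zero[OF assms] subsp_add[OF assms] subsp_scale[OF assms]
  by (simp add: amult_zero_l amult_add_l amult_scale_l)

lemma L_mult:
  assumes x: "x \<in> Lspace c n u S a" and y: "y \<in> Lspace c n u S b"
  shows "amult c n x y \<in> Lspace c n u S (a + b)"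
proof -
  have wy: "amult c n w y \<in> Lspace c n u S (a + b)" if w: "word c n u S k1 w" "k1 \<le> a" for w k1
  proof -
    have "Lspace c n u S b \<subseteq> {z. amult c n w z \<in> Lspace c n u S (a + b)}"
      unfolding Lspace_def[of c n u S b]
    proof (rule lspan_least[OF subsp_pre_r[OF Lspace_subsp]])
      show "{w. \<exists>k\<le>b. word c n u S k w} \<subseteq> {z. amult c n w z \<in> Lspace c n u S (a + b)}"
      proof
        fix z assume "z \<in> {w. \<exists>k\<le>b. word c n u S k w}"
        then obtain k2 where "k2 \<le> b" "word c n u S k2 z" by blast
        then have "word c n u S (k1 + k2) (amult c n w z)" using w word_mul by blast
        then show "z \<in> {z. amult c n w z \<in> Lspace c n u S (a + b)}"
          using word_in_L \<open>k2 \<le> b\<close> w(2) by fastforce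
      qed
    qed
    then show ?thesis using y by blast
  qed
  have "Lspace c n u S a \<subseteq> {z. amult c n z y \<in> Lspace c n u S (a + b)}"
    unfolding Lspace_def[of c n u S a]
  proof (rule lspan_least[OF subsp_pre_l[OF Lspace_subsp]])
    show "{w. \<exists>k\<le>a. word c n u S k w} \<subseteq> {z. amult c n z y \<in> Lspace c n u S (a + b)}"
      using wy by blast
  qed
  then show ?thesis using x by blast
qed

definition bas :: "nat \<Rightarrow> nat \<Rightarrow> 'a::field" where
  "bas i = (\<lambda>k. if k = i then 1 else 0)"

lemma bas_vspace: "i < n \<Longrightarrow> bas i \<in> vspace n"
  unfolding bas_def vspace_def by auto

lemma unit_cst:
  assumes "0 < n"
  shows "is_unit_of (cst h) n (bas 0 :: nat \<Rightarrow> 'a::field)"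
  unfolding is_unit_of_def
proof (intro conjI ballI)
  show "bas 0 \<in> vspace n" using assms by (rule bas_vspace)
next
  fix x :: "nat \<Rightarrow> 'a" assume x: "x \<in> vspace n"
  show "amult (cst h) n (bas 0) x = x"
  proof
    fix k show "amult (cst h) n (bas 0) x k = x k"
    proof (cases "k < n")
      case True then show ?thesis by (simp add: amult_cst bas_def)
    next
      case False then show ?thesis using x by (simp add: amult_def vspace_def)
    qed
  qed
  show "amult (cst h) n x (bas 0) = x"
  proof
    fix k show "amult (cst h) n x (bas 0) k = x k"
    proof (cases "k < n")
      case True then show ?thesis by (simp add: amult_cst bas_def)
    next
      case False then show ?thesis using x by (simp add: amult_def vspace_def)
    qed
  qed
qed

lemma bas_mult:
  assumes "i < n" "j < n" "Suc h < n"
  shows "amult (cst h) n (bas i) (bas j :: nat \<Rightarrow> 'a::field) =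
    (if i = 0 then bas j else if j = 0 then bas i else if i = j \<and> i \<le> h then bas (Suc i) else (\<lambda>k. 0))"
proof
  fix k show "amult (cst h) n (bas i) (bas j :: nat \<Rightarrow> 'a::field) k =
    (if i = 0 then bas j else if j = 0 then bas i else if i = j \<and> i \<le> h then bas (Suc i) else (\<lambda>k. 0)) k"
  proof (cases "k < n")
    case True then show ?thesis by (auto simp: amult_cst bas_def)
  next
    case False then show ?thesis using assms by (simp add: amult_def bas_def)
  qed
qed

definition Iset :: "nat \<Rightarrow> nat \<Rightarrow> (nat \<Rightarrow> 'a::field) set" where
  "Iset h t = {z. \<forall>i. z i \<noteq> 0 \<longrightarrow> t < i \<and> i \<le> Suc h}"

lemma Iset_subsp: "subsp (Iset h t)"
  unfolding subsp_def Iset_def by (auto; metis add.left_neutral add.right_neutral)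

lemma subsp_sum:
  assumes A: "subsp A" and B: "subsp B"
  shows "subsp {x. \<exists>a\<in>A. \<exists>b\<in>B. x = (\<lambda>k. a k + b k)}"
  unfolding subsp_def
proof (intro conjI ballI allI)
  have "(\<lambda>k. 0::'a::field) = (\<lambda>k. (\<lambda>k. 0::'a) k + (\<lambda>k. 0) k)" by simp
  then show "(\<lambda>k. 0) \<in> {x. \<exists>a\<in>A. \<exists>b\<in>B. x = (\<lambda>k. a k + b k)}"
    using subsp_zero[OF A] subsp_zero[OF B] by (intro CollectI bexI[of _ "\<lambda>k. 0"]) auto
next
  fix x y assume "x \<in> {x. \<exists>a\<in>A. \<exists>b\<in>B. x = (\<lambda>k. a k + b k)}" "y \<in> {x. \<exists>a\<in>A. \<exists>b\<in>B. x = (\<lambda>k. a k + b k)}"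
  then obtain a1 b1 a2 b2 where h: "a1 \<in> A" "b1 \<in> B" "x = (\<lambda>k. a1 k + b1 k)"
    "a2 \<in> A" "b2 \<in> B" "y = (\<lambda>k. a2 k + b2 k)" by blast
  have e: "(\<lambda>k. x k + y k) = (\<lambda>k. (\<lambda>k. a1 k + a2 k) k + (\<lambda>k. b1 k + b2 k) k)"
    using h(3,6) by (simp add: algebra_simps)
  have "(\<lambda>k. a1 k + a2 k) \<in> A" "(\<lambda>k. b1 k + b2 k) \<in> B"
    using subsp_add[OF A h(1,4)] subsp_add[OF B h(2,5)] by auto
  then show "(\<lambda>k. x k + y k) \<in> {x. \<exists>a\<in>A. \<exists>b\<in>B. x = (\<lambda>k. a k + b k)}"
    apply -
    apply (rule CollectI, rule bexI[of _ "\<lambda>k. a1 k + a2 k"], rule bexI[of _ "\<lambda>k. b1 k + b2 k"])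
    using e by auto
next
  fix c x assume "x \<in> {x. \<exists>a\<in>A. \<exists>b\<in>B. x = (\<lambda>k. a k + b k)}"
  then obtain a1 b1 where h: "a1 \<in> A" "b1 \<in> B" "x = (\<lambda>k. a1 k + b1 k)" by blast
  have e: "(\<lambda>k. c * x k) = (\<lambda>k. (\<lambda>k. c * a1 k) k + (\<lambda>k. c * b1 k) k)"
    using h(3) by (simp add: algebra_simps)
  have "(\<lambda>k. c * a1 k) \<in> A" "(\<lambda>k. c * b1 k) \<in> B"
    using subsp_scale[OF A h(1)] subsp_scale[OF B h(2)] by auto
  then show "(\<lambda>k. c * x k) \<in> {x. \<exists>a\<in>A. \<exists>b\<in>B. x = (\<lambda>k. a k + b k)}"
    apply -
    apply (rule CollectI, rule bexI[of _ "\<lambda>k. c * a1 k"], rule bexI[of _ "\<lambda>k. c * b1 k"])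
    using e by auto
qed

lemma amult_decomp:
  assumes "x \<in> vspace n" "y \<in> vspace n"
  shows "amult (cst h) n x (y :: nat \<Rightarrow> 'a::field) = (\<lambda>k. ((x 0 * y k + y 0 * x k) + (-(x 0 * y 0)) * bas 0 k)
     + (if k < n \<and> 2 \<le> k \<and> k \<le> Suc h then x (k-1) * y (k-1) else 0))"
proof
  fix k show "amult (cst h) n x y k = ((x 0 * y k + y 0 * x k) + (-(x 0 * y 0)) * bas 0 k)
     + (if k < n \<and> 2 \<le> k \<and> k \<le> Suc h then x (k-1) * y (k-1) else 0)"
  proof (cases "k < n")
    case True then show ?thesis by (auto simp: amult_cst bas_def algebra_simps)
  next
    case False then show ?thesis using assms by (auto simp: amult_def vspace_def bas_def)
  qed
qed

definition Mset :: "nat \<Rightarrow> nat \<Rightarrow> (nat \<Rightarrow> 'a::field) set \<Rightarrow> (nat \<Rightarrow> 'a) set" where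
  "Mset h n S = {x. \<exists>a\<in>Lspace (cst h) n (bas 0) S 1. \<exists>b\<in>Iset h 1. x = (\<lambda>k. a k + b k)}"

lemma Mset_subsp: "subsp (Mset h n S)"
  unfolding Mset_def by (rule subsp_sum[OF Lspace_subsp Iset_subsp])

lemma zero_Iset: "(\<lambda>k. 0) \<in> Iset h t"
  unfolding Iset_def by simp

lemma L1_sub_M: "a \<in> Lspace (cst h) n (bas 0) S 1 \<Longrightarrow> a \<in> Mset h n S"
  unfolding Mset_def
  apply (rule CollectI, rule bexI[of _ a], rule bexI[of _ "\<lambda>k. 0"])
  using zero_Iset by auto

lemma I_sub_M: "b \<in> Iset h 1 \<Longrightarrow> b \<in> Mset h n S"
  unfolding Mset_def
  apply (rule CollectI, rule bexI[of _ "\<lambda>k. 0"], rule bexI[of _ b])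
  using subsp_zero[OF Lspace_subsp] by auto

lemma words_in_M:
  fixes S :: "(nat \<Rightarrow> 'a::field) set"
  assumes "word (cst h) n (bas 0) S k w" "S \<subseteq> vspace n" "Suc h < n"
  shows "w \<in> Mset h n S"
  using assms(1)
proof (induction rule: word.induct)
  case word_one
  show ?case by (rule L1_sub_M, rule word_in_L[OF word.word_one]) simp
next
  case (word_gen s)
  show ?case by (rule L1_sub_M, rule word_in_L[OF word.word_gen[OF word_gen]]) simp
next
  case (word_mul a x b y)
  have u: "bas 0 \<in> vspace n" using assms(3) by (intro bas_vspace) simp
  have xv: "x \<in> vspace n" by (rule word_vspace[OF word_mul(1) assms(2) u])
  have yv: "y \<in> vspace n" by (rule word_vspace[OF word_mul(2) assms(2) u])
  note sM = Mset_subsp[of h n S]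
  have A1: "(\<lambda>k. x 0 * y k + y 0 * x k) \<in> Mset h n S"
    by (rule subsp_lin2[OF sM word_mul(4) word_mul(3)])
  have bM: "bas 0 \<in> Mset h n S" by (rule L1_sub_M, rule word_in_L[OF word.word_one]) simp
  have A2: "(\<lambda>k. (x 0 * y k + y 0 * x k) + (-(x 0 * y 0)) * bas 0 k) \<in> Mset h n S"
    by (rule subsp_add[OF sM A1 subsp_scale[OF sM bM]])
  have rI: "(\<lambda>k. if k < n \<and> 2 \<le> k \<and> k \<le> Suc h then x (k-1) * y (k-1) else 0) \<in> Iset h 1"
    unfolding Iset_def by auto
  have A3: "(\<lambda>k. ((x 0 * y k + y 0 * x k) + (-(x 0 * y 0)) * bas 0 k)
     + (if k < n \<and> 2 \<le> k \<and> k \<le> Suc h then x (k-1) * y (k-1) else 0)) \<in> Mset h n S"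
    by (rule subsp_add[OF sM A2 I_sub_M[OF rI]])
  show ?case unfolding amult_decomp[OF xv yv] by (rule A3)
qed

lemma upper_Q:
  fixes S :: "(nat \<Rightarrow> 'a::field) set"
  assumes gs: "generating_set (cst h) n (bas 0) S" and hn: "Suc h < n" and t: "t \<le> h"
  shows "\<forall>x\<in>vspace n. \<exists>w\<in>Lspace (cst h) n (bas 0) S (2^t). \<exists>z\<in>Iset h (Suc t). x = (\<lambda>k. w k + z k)"
  using t
proof (induction t)
  case 0
  from gs obtain k where Lk: "Lspace (cst h) n (bas 0) S k = vspace n" and Sv: "S \<subseteq> vspace n"
    unfolding generating_set_def by blast
  have "Lspace (cst h) n (bas 0) S k \<subseteq> Mset h n S"
    unfolding Lspace_def
    by (rule lspan_least[OF Mset_subsp]) (auto intro: words_in_M[OF _ Sv hn])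
  then have "vspace n \<subseteq> Mset h n S" using Lk by simp
  then show ?case unfolding Mset_def by auto
next
  case (Suc t)
  then have th: "t < h" by simp
  have IH: "\<forall>x\<in>vspace n. \<exists>w\<in>Lspace (cst h) n (bas 0) S (2^t). \<exists>z\<in>Iset h (Suc t). x = (\<lambda>k. w k + z k)"
    using Suc by simp
  from gs have Sv: "S \<subseteq> vspace n" unfolding generating_set_def by blast
  have u: "bas 0 \<in> vspace n" using hn by (intro bas_vspace) simp
  have "bas (Suc t) \<in> vspace n" using hn th by (intro bas_vspace) simp
  then obtain w1 z1 where w1: "w1 \<in> Lspace (cst h) n (bas 0) S (2^t)" and z1: "z1 \<in> Iset h (Suc t)"
    and e1: "bas (Suc t) = (\<lambda>k. w1 k + z1 k)"
    using IH by blast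
  define p where "p = amult (cst h) n w1 w1"
  have pL: "p \<in> Lspace (cst h) n (bas 0) S (2^Suc t)"
    using L_mult[OF w1 w1] unfolding p_def by (simp add: mult_2)
  have w1e: "w1 k = bas (Suc t) k - z1 k" for k
    using fun_cong[OF e1, of k] by simp
  have z1i: "z1 i \<noteq> 0 \<Longrightarrow> Suc t < i \<and> i \<le> Suc h" for i
    using z1 unfolding Iset_def by blast
  have w10: "w1 0 = 0" using w1e[of 0] z1i[of 0] by (auto simp: bas_def)
  have pk: "p k = (if k < n \<and> 2 \<le> k \<and> k \<le> Suc h then w1 (k-1) * w1 (k-1) else 0)" for k
  proof (cases "k < n")
    case True then show ?thesis unfolding p_def by (simp add: amult_cst w10)
  next
    case False then show ?thesis unfolding p_def by (simp add: amult_def)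
  qed
  define z2 where "z2 = (\<lambda>k. bas (Suc (Suc t)) k - p k)"
  have z2I: "z2 \<in> Iset h (Suc (Suc t))"
    unfolding Iset_def
  proof (intro CollectI allI impI)
    fix i assume nz: "z2 i \<noteq> 0"
    show "Suc (Suc t) < i \<and> i \<le> Suc h"
    proof (cases "i = Suc (Suc t)")
      case True
      have "w1 (Suc t) = 1" using w1e[of "Suc t"] z1i[of "Suc t"] by (auto simp: bas_def)
      then have "p i = 1" using True th hn by (simp add: pk)
      then have "z2 i = 0" unfolding z2_def using True by (simp add: bas_def)
      then show ?thesis using nz by simp
    next
      case False
      then have "p i \<noteq> 0" using nz unfolding z2_def by (simp add: bas_def)
      then have c: "i < n \<and> 2 \<le> i \<and> i \<le> Suc h \<and> w1 (i-1) \<noteq> 0" by (simp add: pk split: if_splits)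
      then have "i - 1 = Suc t \<or> z1 (i-1) \<noteq> 0" using w1e[of "i-1"] by (auto simp: bas_def split: if_splits)
      then show ?thesis using c False z1i[of "i-1"] by auto
    qed
  qed
  have z2t: "z2 (Suc (Suc t)) = 0" using z2I unfolding Iset_def by blast
  have sL: "subsp (Lspace (cst h) n (bas 0) S (2^Suc t))" by (rule Lspace_subsp)
  show ?case
  proof
    fix x :: "nat \<Rightarrow> 'a" assume "x \<in> vspace n"
    then obtain w z where w: "w \<in> Lspace (cst h) n (bas 0) S (2^t)" and z: "z \<in> Iset h (Suc t)"
      and e: "x = (\<lambda>k. w k + z k)"
      using IH by blast
    define al where "al = z (Suc (Suc t))"
    have wm: "w \<in> Lspace (cst h) n (bas 0) S (2^Suc t)"
      by (rule subsetD[OF Lspace_mono w]) simp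
    have w': "(\<lambda>k. w k + al * p k) \<in> Lspace (cst h) n (bas 0) S (2^Suc t)"
      by (rule subsp_add[OF sL wm subsp_scale[OF sL pL]])
    have zi: "z i \<noteq> 0 \<Longrightarrow> Suc t < i \<and> i \<le> Suc h" for i
      using z unfolding Iset_def by blast
    have z2i: "z2 i \<noteq> 0 \<Longrightarrow> Suc (Suc t) < i \<and> i \<le> Suc h" for i
      using z2I unfolding Iset_def by blast
    have z': "(\<lambda>k. z k - al * bas (Suc (Suc t)) k + al * z2 k) \<in> Iset h (Suc (Suc t))"
      unfolding Iset_def
    proof (intro CollectI allI impI)
      fix i assume nz: "z i - al * bas (Suc (Suc t)) i + al * z2 i \<noteq> 0"
      show "Suc (Suc t) < i \<and> i \<le> Suc h"
      proof (cases "i = Suc (Suc t)")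
        case True
        then show ?thesis using nz z2t unfolding al_def by (simp add: bas_def)
      next
        case False
        then have "z i \<noteq> 0 \<or> z2 i \<noteq> 0" using nz by (auto simp: bas_def)
        then show ?thesis using zi[of i] z2i[of i] False by auto
      qed
    qed
    have "x = (\<lambda>k. (w k + al * p k) + (z k - al * bas (Suc (Suc t)) k + al * z2 k))"
      unfolding e z2_def by (simp add: algebra_simps)
    then show "\<exists>w\<in>Lspace (cst h) n (bas 0) S (2 ^ Suc t). \<exists>z\<in>Iset h (Suc (Suc t)). x = (\<lambda>k. w k + z k)"
      apply -
      apply (rule bexI[of _ "\<lambda>k. w k + al * p k"], rule bexI[of _ "\<lambda>k. z k - al * bas (Suc (Suc t)) k + al * z2 k"])
      using w' z' by auto
  qed
qed

lemma upper_L: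
  fixes S :: "(nat \<Rightarrow> 'a::field) set"
  assumes gs: "generating_set (cst h) n (bas 0) S" and hn: "Suc h < n"
  shows "Lspace (cst h) n (bas 0) S (2^h) = vspace n"
proof
  from gs have Sv: "S \<subseteq> vspace n" unfolding generating_set_def by blast
  have u: "bas 0 \<in> vspace n" using hn by (intro bas_vspace) simp
  show "Lspace (cst h) n (bas 0) S (2^h) \<subseteq> vspace n" by (rule Lspace_vspace[OF Sv u])
  show "vspace n \<subseteq> Lspace (cst h) n (bas 0) S (2^h)"
  proof
    fix x :: "nat \<Rightarrow> 'a" assume "x \<in> vspace n"
    then obtain w z where w: "w \<in> Lspace (cst h) n (bas 0) S (2^h)" and z: "z \<in> Iset h (Suc h)"
      and e: "x = (\<lambda>k. w k + z k)"
      using upper_Q[OF gs hn order.refl] by blast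
    have "\<And>i. z i = 0" using z unfolding Iset_def by fastforce
    then have "x = w" using e by simp
    then show "x \<in> Lspace (cst h) n (bas 0) S (2^h)" using w by simp
  qed
qed

definition S0 :: "nat \<Rightarrow> nat \<Rightarrow> (nat \<Rightarrow> 'a::field) set" where
  "S0 h n = bas ` {i. i < n \<and> (i = 1 \<or> Suc h < i)}"

definition wt :: "nat \<Rightarrow> nat \<Rightarrow> nat" where
  "wt h i = (if i = 0 then 0 else if i \<le> Suc h then 2^(i-1) else 1)"

lemma S0_vspace: "S0 h n \<subseteq> vspace n"
  unfolding S0_def using bas_vspace by blast

lemma S0_finite: "finite (S0 h n)"
  unfolding S0_def by simp

lemma words_S0:
  assumes "word (cst h) n (bas 0) (S0 h n :: (nat \<Rightarrow> 'a::field) set) k w" "Suc h < n"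
  shows "w = (\<lambda>k. 0) \<or> (\<exists>i<n. w = bas i \<and> wt h i = k)"
  using assms(1)
proof (induction rule: word.induct)
  case word_one
  have "0 < n" "wt h 0 = 0" using assms(2) by (auto simp: wt_def)
  then show ?case by blast
next
  case (word_gen s)
  then obtain i where "i < n" "i = 1 \<or> Suc h < i" "s = bas i" unfolding S0_def by blast
  moreover have "wt h i = 1" using \<open>i = 1 \<or> Suc h < i\<close> by (auto simp: wt_def)
  ultimately show ?case by blast
next
  case (word_mul a x b y)
  show ?case
  proof (cases "x = (\<lambda>k. 0) \<or> y = (\<lambda>k. 0)")
    case True
    then have "amult (cst h) n x y = (\<lambda>k. 0)" by (auto simp: amult_zero_l amult_zero_r)
    then show ?thesis by (rule disjI1)
  next
    case False
    have ex1: "\<exists>i<n. x = bas i \<and> wt h i = a"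
      using word_mul.IH(1)
    proof (rule disjE)
      assume "x = (\<lambda>k. 0)" with False show ?thesis by simp
    qed
    have ex2: "\<exists>j<n. y = bas j \<and> wt h j = b"
      using word_mul.IH(2)
    proof (rule disjE)
      assume "y = (\<lambda>k. 0)" with False show ?thesis by simp
    qed
    obtain i where i: "i < n" "x = bas i" "wt h i = a" using ex1 by blast
    obtain j where j: "j < n" "y = bas j" "wt h j = b" using ex2 by blast
    note ij = i j
    have m: "amult (cst h) n x y = (if i = 0 then bas j else if j = 0 then bas i else if i = j \<and> i \<le> h then bas (Suc i) else (\<lambda>k. 0))"
      unfolding ij(2,5) by (rule bas_mult[OF ij(1,4) assms(2)])
    show ?thesis
    proof (cases "i = 0 \<or> j = 0 \<or> (i = j \<and> i \<le> h)")
      case True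
      then consider "i = 0" | "i \<noteq> 0" "j = 0" | "i \<noteq> 0" "j \<noteq> 0" "i = j" "i \<le> h" by blast
      then show ?thesis
      proof cases
        case 1
        have "amult (cst h) n x y = bas j" using m 1 by simp
        moreover have "wt h j = a + b" using ij 1 by (simp add: wt_def)
        ultimately show ?thesis using ij by blast
      next
        case 2
        have "amult (cst h) n x y = bas i" using m 2 by simp
        moreover have "wt h i = a + b" using ij 2 by (simp add: wt_def)
        ultimately show ?thesis using ij by blast
      next
        case 3
        have "wt h (Suc i) = a + b" using 3 ij
          by (cases i) (auto simp: wt_def)
        moreover have "Suc i < n" using 3 assms(2) by simp
        moreover have "amult (cst h) n x y = bas (Suc i)" using m 3 by simp
        ultimately show ?thesis by blast
      qed
    next
      case False
      then have "amult (cst h) n x y = (\<lambda>k. 0)" using m by auto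
      then show ?thesis by (rule disjI1)
    qed
  qed
qed

lemma S0_not:
  assumes "k < 2^h" "Suc h < n"
  shows "Lspace (cst h) n (bas 0) (S0 h n :: (nat \<Rightarrow> 'a::field) set) k \<noteq> vspace n"
proof
  assume eq: "Lspace (cst h) n (bas 0) (S0 h n :: (nat \<Rightarrow> 'a::field) set) k = vspace n"
  let ?H = "{x :: nat \<Rightarrow> 'a. x (Suc h) = 0}"
  have sH: "subsp ?H" unfolding subsp_def by simp
  have "Lspace (cst h) n (bas 0) (S0 h n :: (nat \<Rightarrow> 'a::field) set) k \<subseteq> ?H"
    unfolding Lspace_def
  proof (rule lspan_least[OF sH], rule subsetI)
    fix w :: "nat \<Rightarrow> 'a" assume "w \<in> {w. \<exists>k'\<le>k. word (cst h) n (bas 0) (S0 h n) k' w}"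
    then obtain k' where k': "k' \<le> k" "word (cst h) n (bas 0) (S0 h n) k' w" by blast
    from words_S0[OF k'(2) assms(2)]
    show "w \<in> ?H"
    proof (rule disjE)
      assume "w = (\<lambda>k. 0)" then show ?thesis by simp
    next
      assume "\<exists>i<n. w = bas i \<and> wt h i = k'"
      then obtain i where i: "w = bas i" "wt h i = k'" by blast
      have "i \<noteq> Suc h"
      proof
        assume "i = Suc h"
        then have "wt h i = 2^h" by (simp add: wt_def)
        then show False using i(2) k'(1) assms(1) by simp
      qed
      then show ?thesis using i by (simp add: bas_def)
    qed
  qed
  moreover have "bas (Suc h) \<in> vspace n" using assms(2) by (rule bas_vspace)
  ultimately show False using eq by (auto simp: bas_def)
qed

lemma bas_words:
  assumes "t \<le> h" "Suc h < n"
  shows "word (cst h) n (bas 0) (S0 h n :: (nat \<Rightarrow> 'a::field) set) (2^t) (bas (Suc t))"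
  using assms(1)
proof (induction t)
  case 0
  have "bas 1 \<in> (S0 h n :: (nat \<Rightarrow> 'a::field) set)" unfolding S0_def using assms(2) by auto
  then show ?case using word.word_gen by fastforce
next
  case (Suc t)
  then have w: "word (cst h) n (bas 0) (S0 h n :: (nat \<Rightarrow> 'a::field) set) (2^t) (bas (Suc t))" by simp
  have "amult (cst h) n (bas (Suc t)) (bas (Suc t) :: nat \<Rightarrow> 'a) = bas (Suc (Suc t))"
    using Suc.prems assms(2) by (subst bas_mult) auto
  then show ?case using word.word_mul[OF w w] by (simp add: mult_2)
qed

lemma span_basis:
  assumes "subsp V" "\<forall>i<m. bas i \<in> V"
  shows "(\<lambda>k. \<Sum>i<m. a i * bas i k) \<in> V"
  using assms(2)
proof (induction m)
  case 0 then show ?case using subsp_zero[OF assms(1)] by simp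
next
  case (Suc m)
  then have "(\<lambda>k. \<Sum>i<m. a i * bas i k) \<in> V" "bas m \<in> V" by auto
  from subsp_add[OF assms(1) this(1) subsp_scale[OF assms(1) this(2)]]
  show ?case by (simp add: add.commute)
qed

lemma vspace_expand: "x \<in> vspace n \<Longrightarrow> x = (\<lambda>k. \<Sum>i<n. x i * bas i k)"
  unfolding vspace_def bas_def by (auto simp: mif2)

lemma S0_full:
  assumes hn: "Suc h < n"
  shows "Lspace (cst h) n (bas 0) (S0 h n :: (nat \<Rightarrow> 'a::field) set) (2^h) = vspace n"
proof
  have u: "bas 0 \<in> vspace n" using hn by (intro bas_vspace) simp
  show "Lspace (cst h) n (bas 0) (S0 h n :: (nat \<Rightarrow> 'a::field) set) (2^h) \<subseteq> vspace n"
    by (rule Lspace_vspace[OF S0_vspace u])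
  have B: "\<forall>i<n. bas i \<in> Lspace (cst h) n (bas 0) (S0 h n :: (nat \<Rightarrow> 'a::field) set) (2^h)"
  proof (intro allI impI)
    fix i assume i: "i < n"
    consider "i = 0" | "1 \<le> i" "i \<le> Suc h" | "Suc h < i" by linarith
    then show "bas i \<in> Lspace (cst h) n (bas 0) (S0 h n :: (nat \<Rightarrow> 'a::field) set) (2^h)"
    proof cases
      case 1 then show ?thesis using word_in_L[OF word.word_one] by simp
    next
      case 2
      have w: "word (cst h) n (bas 0) (S0 h n :: (nat \<Rightarrow> 'a::field) set) (2^(i-1)) (bas (Suc (i-1)))"
        using 2 hn by (intro bas_words) auto
      have "(2::nat)^(i-1) \<le> 2^h" using 2 by (intro power_increasing) auto
      then show ?thesis using word_in_L[OF w] 2 by simp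
    next
      case 3
      have "bas i \<in> (S0 h n :: (nat \<Rightarrow> 'a::field) set)" unfolding S0_def using 3 i by auto
      then have w: "word (cst h) n (bas 0) (S0 h n :: (nat \<Rightarrow> 'a::field) set) 1 (bas i)"
        by (rule word.word_gen)
      have "(1::nat) \<le> 2^h" by simp
      then show ?thesis using word_in_L[OF w] by simp
    qed
  qed
  show "vspace n \<subseteq> Lspace (cst h) n (bas 0) (S0 h n :: (nat \<Rightarrow> 'a::field) set) (2^h)"
  proof
    fix x :: "nat \<Rightarrow> 'a" assume "x \<in> vspace n"
    then have "x = (\<lambda>k. \<Sum>i<n. x i * bas i k)" by (rule vspace_expand)
    also have "\<dots> \<in> Lspace (cst h) n (bas 0) (S0 h n :: (nat \<Rightarrow> 'a::field) set) (2^h)"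
      by (rule span_basis[OF Lspace_subsp B])
    finally show "x \<in> Lspace (cst h) n (bas 0) (S0 h n :: (nat \<Rightarrow> 'a::field) set) (2^h)" .
  qed
qed

theorem proposition3p8:
  fixes n h :: nat
  assumes "n \<ge> 2" and "h \<le> n - 2"
  shows "\<exists>(c :: nat \<Rightarrow> nat \<Rightarrow> nat \<Rightarrow> 'a::field) u.
           is_unit_of c n u \<and> alg_length c n u = 2 ^ h"
proof -
  have hn: "Suc h < n" using assms by linarith
  let ?c = "cst h :: nat \<Rightarrow> nat \<Rightarrow> nat \<Rightarrow> 'a"
  let ?u = "bas 0 :: nat \<Rightarrow> 'a"
  have unit: "is_unit_of ?c n ?u" using hn by (intro unit_cst) simp
  let ?V = "{set_length ?c n ?u S | S. generating_set ?c n ?u S}"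
  have gS0: "generating_set ?c n ?u (S0 h n)"
    unfolding generating_set_def using S0_finite S0_vspace S0_full[OF hn] by blast
  have lS0: "set_length ?c n ?u (S0 h n) = 2^h"
    unfolding set_length_def
  proof (rule Least_equality)
    show "Lspace ?c n ?u (S0 h n) (2^h) = vspace n" by (rule S0_full[OF hn])
  next
    fix k assume "Lspace ?c n ?u (S0 h n) k = vspace n"
    then show "2^h \<le> k" using S0_not[OF _ hn] by (meson not_le)
  qed
  have in_V: "2^h \<in> ?V" using gS0 lS0 by (metis (mono_tags, lifting) mem_Collect_eq)
  have le_V: "\<forall>v\<in>?V. v \<le> 2^h"
  proof
    fix v assume "v \<in> ?V"
    then obtain S where S: "v = set_length ?c n ?u S" "generating_set ?c n ?u S" by blast
    have "Lspace ?c n ?u S (2^h) = vspace n" by (rule upper_L[OF S(2) hn])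
    then show "v \<le> 2^h" unfolding S(1) set_length_def by (rule Least_le)
  qed
  have fin: "finite ?V" by (rule finite_subset[of _ "{..2^h}"]) (use le_V in auto)
  have "alg_length ?c n ?u = 2^h"
    unfolding alg_length_def by (rule Max_eqI[OF fin]) (use le_V in_V in auto)
  then show ?thesis using unit by blast
qed

end
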